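(* Let $p$ be a prime and let $\lambda$ be an element of order $k\geq 3$ in the multiplicative group $\mathbb{F}_p^*$. Then $$\rho(\lambda,p)\geq p^{1/\phi(k)}/\sqrt{8},$$ where $\phi$ is Euler's totient function.
   Context: For $\mathbf{h}=(h_1,h_2)\in\mathbb{Z}^2$ let $r(\mathbf{h})=\max\{1,|h_1|\}\cdot\max\{1,|h_2|\}$. For $\lambda\in\{1,\dots,p-1\}$ define $\rho(\lambda,p)=\min r(\mathbf{h})$, the minimum taken over all nonzero $\mathbf{h}=(h_1,h_2)\in\mathbb{Z}^2$ satisfying $h_1+h_2\lambda\equiv 0\pmod p$ (here $\lambda$ is identified with an integer representative). *)

theory Defs
  imports "HOL-Number_Theory.Number_Theory"
begin

definition r_weight :: "int \<times> int \<Rightarrow> nat" where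
  "r_weight h = max 1 (nat \<bar>fst h\<bar>) * max 1 (nat \<bar>snd h\<bar>)"

definition rho :: "int \<Rightarrow> int \<Rightarrow> nat" where
  "rho lam p = (LEAST n. \<exists>h::int \<times> int. h \<noteq> (0, 0) \<and>
       [fst h + snd h * lam = 0] (mod p) \<and> n = r_weight h)"

end

theory Submission
  imports Defs "HOL-Computational_Algebra.Fundamental_Theorem_Algebra"
begin


definition prim :: "nat \<Rightarrow> complex set" where
  "prim d = {z. z ^ d = 1 \<and> (\<forall>m. 0 < m \<and> m < d \<longrightarrow> z ^ m \<noteq> 1)}"

definition cyc :: "nat \<Rightarrow> complex poly" where
  "cyc d = (\<Prod>z\<in>prim d. [:-z, 1:])"

definition intpoly :: "complex poly \<Rightarrow> bool" where
  "intpoly f \<longleftrightarrow> (\<forall>i. coeff f i \<in> \<int>)"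

lemma finite_prim: "d > 0 \<Longrightarrow> finite (prim d)"
  by (rule finite_subset[OF _ finite_roots_unity[of d]]) (auto simp: prim_def)

lemma U_decomp:
  assumes "n > 0"
  shows "{z::complex. z ^ n = 1} = (\<Union>d\<in>{d. d dvd n}. prim d)"
proof safe
  fix z :: complex assume z: "z ^ n = 1"
  define d where "d = (LEAST m. 0 < m \<and> z ^ m = 1)"
  have d1: "0 < d \<and> z ^ d = 1" unfolding d_def by (rule LeastI[of _ n]) (use assms z in auto)
  have d2: "\<not> (0 < m \<and> z ^ m = 1)" if "m < d" for m
    using not_less_Least[of m "\<lambda>m. 0 < m \<and> z ^ m = 1"] that unfolding d_def by blast
  have "z ^ (d * (n div d) + n mod d) = (z ^ d) ^ (n div d) * z ^ (n mod d)"
    by (simp only: power_add power_mult)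
  hence "z ^ n = (z ^ d) ^ (n div d) * z ^ (n mod d)" by (simp only: mult_div_mod_eq)
  also have "\<dots> = z ^ (n mod d)" using d1 by simp
  finally have "z ^ (n mod d) = 1" using z by simp
  hence "n mod d = 0" using d2[of "n mod d"] d1 by auto
  hence "d dvd n" by auto
  moreover have "z \<in> prim d" using d1 d2 by (auto simp: prim_def)
  ultimately show "z \<in> (\<Union>d\<in>{d. d dvd n}. prim d)" by blast
next
  fix z :: complex and d assume "d dvd n" "z \<in> prim d"
  then obtain e where "n = d * e" by auto
  with \<open>z \<in> prim d\<close> show "z ^ n = 1" by (simp add: prim_def power_mult)
qed

lemma prim_disjoint:
  assumes "d1 > 0" "d2 > 0" "d1 \<noteq> d2"
  shows "prim d1 \<inter> prim d2 = {}"
proof (cases "d1 < d2")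
  case True then show ?thesis using assms by (auto simp: prim_def)
next
  case False then have "d2 < d1" using assms by auto
  then show ?thesis using assms by (auto simp: prim_def)
qed

lemma rsq_xn:
  assumes "n > 0"
  shows "rsquarefree (monom (1::complex) n - 1)"
  unfolding rsquarefree_roots
proof (intro allI notI)
  fix a :: complex
  assume h: "poly (monom 1 n - 1) a = 0 \<and> poly (pderiv (monom 1 n - 1)) a = 0"
  hence "a ^ n = 1" by (simp add: poly_monom)
  hence "a \<noteq> 0" using assms by (auto simp: power_0_left)
  from h have "of_nat n * a ^ (n - 1) = 0" by (simp add: pderiv_diff pderiv_monom poly_monom)
  thus False using assms \<open>a \<noteq> 0\<close> by simp
qed

lemma lead_xn:
  assumes "n > 0"
  shows "lead_coeff (monom (1::complex) n - 1) = 1"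
proof -
  have "degree (monom (1::complex) n - 1) = n"
    using assms by (intro order.antisym degree_diff_le le_degree) (auto simp: degree_monom_eq)
  thus ?thesis using assms by simp
qed

lemma xn_prod:
  assumes "n > 0"
  shows "monom (1::complex) n - 1 = (\<Prod>d\<in>{d. d dvd n}. cyc d)"
proof -
  have "monom (1::complex) n - 1 = smult (lead_coeff (monom (1::complex) n - 1))
         (\<Prod>z | poly (monom 1 n - 1) z = 0. [:-z, 1:])"
    using complex_poly_decompose_rsquarefree[OF rsq_xn[OF assms]] by simp
  also have "{z. poly (monom (1::complex) n - 1) z = 0} = {z. z ^ n = 1}"
    by (simp add: poly_monom)
  also have "\<dots> = (\<Union>d\<in>{d. d dvd n}. prim d)" by (rule U_decomp[OF assms])
  also have "(\<Prod>z\<in>(\<Union>d\<in>{d. d dvd n}. prim d). [:-z, 1:]) = (\<Prod>d\<in>{d. d dvd n}. cyc d)"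
    unfolding cyc_def
  proof (rule prod.UNION_disjoint)
    show "finite {d. d dvd n}" using assms by simp
    show "\<forall>i\<in>{d. d dvd n}. finite (prim i)" using assms
      by (auto intro!: finite_prim intro: dvd_pos_nat)
    show "\<forall>i\<in>{d. d dvd n}. \<forall>j\<in>{d. d dvd n}. i \<noteq> j \<longrightarrow> prim i \<inter> prim j = {}"
    proof (intro ballI impI)
      fix i j assume "i \<in> {d. d dvd n}" "j \<in> {d. d dvd n}" "i \<noteq> j"
      then show "prim i \<inter> prim j = {}" using assms
        by (intro prim_disjoint) (auto intro: dvd_pos_nat)
    qed
  qed
  finally show ?thesis using lead_xn[OF assms] by simp
qed

lemma intpoly_mult: "intpoly f \<Longrightarrow> intpoly g \<Longrightarrow> intpoly (f * g)"
  unfolding intpoly_def coeff_mult by (auto intro!: Ints_sum Ints_mult)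

lemma intpoly_diff: "intpoly f \<Longrightarrow> intpoly g \<Longrightarrow> intpoly (f - g)"
  unfolding intpoly_def by (auto intro!: Ints_diff)

lemma intpoly_add: "intpoly f \<Longrightarrow> intpoly g \<Longrightarrow> intpoly (f + g)"
  unfolding intpoly_def by (auto intro!: Ints_add)

lemma intpoly_1: "intpoly 1"
  unfolding intpoly_def by (auto simp: coeff_1)

lemma intpoly_monom: "c \<in> \<int> \<Longrightarrow> intpoly (monom c n)"
  unfolding intpoly_def by auto

lemma intpoly_prod: "(\<And>x. x \<in> A \<Longrightarrow> intpoly (f x)) \<Longrightarrow> intpoly (prod f A)"
  by (induction A rule: infinite_finite_induct) (auto intro: intpoly_mult intpoly_1)

lemma intpoly_monic_div:
  fixes g q :: "complex poly"
  assumes "intpoly g" "lead_coeff g = 1" "intpoly (g * q)"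
  shows "intpoly q"
  using assms(3)
proof (induction "degree q" arbitrary: q rule: less_induct)
  case less
  show ?case
  proof (cases "q = 0")
    case True then show ?thesis by (simp add: intpoly_def)
  next
    case False
    have g0: "g \<noteq> 0" using assms(2) by auto
    define c where "c = lead_coeff q"
    define q0 where "q0 = q - monom c (degree q)"
    have "lead_coeff (g * q) = c" using assms(2) by (simp add: lead_coeff_mult c_def)
    hence cI: "c \<in> \<int>" using less.prems unfolding intpoly_def by metis
    have "g * q0 = g * q - g * monom c (degree q)" by (simp add: q0_def algebra_simps)
    hence i0: "intpoly (g * q0)"
      by (metis intpoly_diff intpoly_mult less.prems assms(1) intpoly_monom cI)
    have "intpoly q0"
    proof (cases "q0 = 0")
      case True then show ?thesis by (simp add: intpoly_def)
    next
      case False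
      have "degree q0 < degree q"
      proof (cases "degree q = 0")
        case True
        then obtain a where "q = [:a:]" by (metis degree_eq_zeroE)
        then have "q0 = 0" by (simp add: q0_def c_def monom_0)
        then show ?thesis using False by simp
      next
        case dq: False
        have "degree q0 \<le> degree q" unfolding q0_def
          by (rule order.trans[OF degree_diff_le_max]) (simp add: degree_monom_le)
        moreover have "coeff q0 (degree q) = 0" by (simp add: q0_def c_def)
        ultimately show ?thesis using False
          by (metis le_neq_implies_less leading_coeff_0_iff)
      qed
      then show ?thesis using less.hyps i0 by blast
    qed
    moreover have "q = q0 + monom c (degree q)" by (simp add: q0_def)
    ultimately show ?thesis by (metis intpoly_add intpoly_monom cI)
  qed
qed

lemma intpoly_xn: "intpoly (monom 1 n - 1)"
  by (intro intpoly_diff intpoly_monom intpoly_1) auto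

lemma lead_cyc: "lead_coeff (cyc n) = 1"
  unfolding cyc_def lead_coeff_prod by simp

lemma intpoly_cyc: "n > 0 \<Longrightarrow> intpoly (cyc n)"
proof (induction n rule: less_induct)
  case (less n)
  define P where "P = (\<Prod>d\<in>{d. d dvd n \<and> d < n}. cyc d)"
  have "{d. d dvd n} = insert n {d. d dvd n \<and> d < n}"
    using less.prems by (auto dest: dvd_imp_le)
  hence "monom 1 n - 1 = cyc n * P"
    using xn_prod[OF less.prems] by (simp add: P_def)
  hence i: "intpoly (P * cyc n)" using intpoly_xn[of n] by (simp add: mult.commute)
  have "intpoly P" unfolding P_def
    by (intro intpoly_prod less.IH) (auto intro: dvd_pos_nat[OF less.prems])
  moreover have "lead_coeff P = 1" unfolding P_def lead_coeff_prod by (simp add: lead_cyc)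
  ultimately show ?case using intpoly_monic_div i by blast
qed

lemma prim_disjoint': "i \<in> {d. d dvd n} \<Longrightarrow> j \<in> {d. d dvd n} \<Longrightarrow> i \<noteq> j \<Longrightarrow> n > 0
   \<Longrightarrow> prim i \<inter> prim j = {}"
  by (intro prim_disjoint) (auto intro: dvd_pos_nat)

lemma card_prim_sum:
  assumes "n > 0"
  shows "(\<Sum>d | d dvd n. card (prim d)) = n"
proof -
  have "n = card {z::complex. z ^ n = 1}" using card_roots_unity_eq[OF assms] by simp
  also have "\<dots> = card (\<Union>d\<in>{d. d dvd n}. prim d)" using U_decomp[OF assms] by simp
  also have "\<dots> = (\<Sum>d | d dvd n. card (prim d))"
    using assms
    by (intro card_UN_disjoint ballI impI prim_disjoint') (auto intro!: finite_prim intro: dvd_pos_nat)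
  finally show ?thesis by simp
qed

lemma card_prim: "n > 0 \<Longrightarrow> card (prim n) = totient n"
proof (induction n rule: less_induct)
  case (less n)
  have eq: "{d. d dvd n} = insert n {d. d dvd n \<and> d < n}"
    using less.prems by (auto dest: dvd_imp_le)
  have fin: "finite {d. d dvd n \<and> d < n}" by simp
  have "(\<Sum>d | d dvd n \<and> d < n. card (prim d)) = (\<Sum>d | d dvd n \<and> d < n. totient d)"
    by (intro sum.cong refl less.IH) (auto intro: dvd_pos_nat[OF less.prems])
  moreover have "card (prim n) + (\<Sum>d | d dvd n \<and> d < n. card (prim d)) = n"
    using card_prim_sum[OF less.prems] by (simp add: eq sum.insert[OF fin])
  moreover have "totient n + (\<Sum>d | d dvd n \<and> d < n. totient d) = n"
    using totient_divisor_sum[of n] by (simp add: eq sum.insert[OF fin])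
  ultimately show ?case by simp
qed

lemma degree_cyc: "n > 0 \<Longrightarrow> degree (cyc n) = card (prim n)"
  unfolding cyc_def by (subst degree_prod_sum_eq) auto

lemma poly_intpoly: "intpoly f \<Longrightarrow> x \<in> \<int> \<Longrightarrow> poly f x \<in> \<int>"
  unfolding poly_altdef intpoly_def by (auto intro!: Ints_sum Ints_mult Ints_power)

lemma Ints_floor_Re: "x \<in> \<int> \<Longrightarrow> complex_of_int \<lfloor>Re x\<rfloor> = x"
  by (elim Ints_cases) simp

definition cv :: "nat \<Rightarrow> int \<Rightarrow> int" where
  "cv d l = \<lfloor>Re (poly (cyc d) (of_int l))\<rfloor>"

lemma cv_eq: "d > 0 \<Longrightarrow> of_int (cv d l) = poly (cyc d) (of_int l)"
  unfolding cv_def by (intro Ints_floor_Re poly_intpoly intpoly_cyc) auto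

lemma pow_prod:
  assumes "n > 0"
  shows "l ^ n - 1 = (\<Prod>d | d dvd n. cv d l)"
proof -
  have "complex_of_int (l ^ n - 1) = poly (monom 1 n - 1) (of_int l)" by (simp add: poly_monom)
  also have "\<dots> = (\<Prod>d | d dvd n. poly (cyc d) (of_int l))" by (simp add: xn_prod[OF assms] poly_prod)
  also have "\<dots> = (\<Prod>d | d dvd n. complex_of_int (cv d l))"
    using assms by (intro prod.cong refl cv_eq[symmetric]) (auto intro: dvd_pos_nat)
  also have "\<dots> = complex_of_int (\<Prod>d | d dvd n. cv d l)" by simp
  finally show ?thesis by (simp only: of_int_eq_iff)
qed

lemma cv_dvd: "d > 0 \<Longrightarrow> cv d l dvd l ^ d - 1"
  by (subst pow_prod) (auto intro: dvd_prodI)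

lemma p_dvd_cv:
  fixes p lam k :: nat
  assumes "prime p" "ord p lam = k" "k > 0"
  shows "int p dvd cv k (int lam)"
proof -
  have pp: "prime (int p)" using assms(1) by simp
  have "[lam ^ k = 1] (mod p)" using ord[of lam p] assms(2) by simp
  hence "[int (lam ^ k) = int 1] (mod int p)" by (simp only: cong_int_iff)
  hence "[int lam ^ k = 1] (mod int p)" by simp
  hence "int p dvd int lam ^ k - 1" by (simp only: cong_iff_dvd_diff)
  hence "int p dvd (\<Prod>d | d dvd k. cv d (int lam))" by (simp only: pow_prod[OF assms(3)])
  hence "\<exists>d\<in>{d. d dvd k}. int p dvd cv d (int lam)"
    using prime_dvd_prod_iff[of "{d. d dvd k}" "int p" "\<lambda>d. cv d (int lam)"] pp assms(3) by simp
  then obtain d where d: "d dvd k" "int p dvd cv d (int lam)" by blast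
  have d0: "d > 0" using d(1) assms(3) by (rule dvd_pos_nat[rotated])
  show ?thesis
  proof (cases "d < k")
    case True
    have "int p dvd int lam ^ d - 1" using d(2) cv_dvd[OF d0] by (rule dvd_trans)
    hence "[int lam ^ d = 1] (mod int p)" by (simp only: cong_iff_dvd_diff)
    hence "[int (lam ^ d) = int 1] (mod int p)" by simp
    hence "[lam ^ d = 1] (mod p)" by (simp only: cong_int_iff)
    moreover have "\<not> [lam ^ d = 1] (mod p)" using ord_minimal[OF d0, of p lam] True assms(2) by simp
    ultimately show ?thesis by contradiction
  next
    case False
    with dvd_imp_le[OF d(1) assms(3)] have "d = k" by simp
    with d show ?thesis by simp
  qed
qed

lemma prim_norm: "k > 0 \<Longrightarrow> z \<in> prim k \<Longrightarrow> norm z = 1"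
proof -
  assume "k > 0" "z \<in> prim k"
  hence "norm z ^ k = 1 ^ k" by (simp add: prim_def flip: norm_power)
  thus "norm z = 1" using \<open>k > 0\<close> by (subst (asm) power_eq_iff_eq_base) auto
qed

lemma prim_nonreal:
  assumes "k \<ge> 3" "z \<in> prim k"
  shows "Im z \<noteq> 0"
proof
  assume "Im z = 0"
  hence z: "z = complex_of_real (Re z)" by (simp add: complex_eq_iff)
  have "norm z = 1" using prim_norm[of k z] assms by simp
  hence "\<bar>Re z\<bar> = 1" using z by (metis norm_of_real)
  hence "Re z ^ 2 = 1" by (metis abs_power2 one_power2 power2_abs)
  hence "z ^ 2 = 1" using z by (metis of_real_1 of_real_power)
  moreover have "\<forall>m. 0 < m \<and> m < k \<longrightarrow> z ^ m \<noteq> 1" using assms(2) by (simp add: prim_def)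
  ultimately show False using assms(1) by auto
qed

definition wc :: "nat \<Rightarrow> nat \<Rightarrow> int" where
  "wc k i = \<lfloor>Re (coeff (cyc k) i)\<rfloor>"

lemma wc_eq: "k > 0 \<Longrightarrow> complex_of_int (wc k i) = coeff (cyc k) i"
  unfolding wc_def using intpoly_cyc[of k] by (intro Ints_floor_Re) (auto simp: intpoly_def)

lemma cv_sum: "k > 0 \<Longrightarrow> cv k l = (\<Sum>i\<le>degree (cyc k). wc k i * l ^ i)"
proof -
  assume k: "k > 0"
  have "complex_of_int (cv k l) = (\<Sum>i\<le>degree (cyc k). coeff (cyc k) i * of_int l ^ i)"
    using cv_eq[OF k] by (simp add: poly_altdef)
  also have "\<dots> = complex_of_int (\<Sum>i\<le>degree (cyc k). wc k i * l ^ i)"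
    by (simp add: wc_eq[OF k])
  finally show ?thesis by (simp only: of_int_eq_iff)
qed

lemma hom_eq:
  fixes a b :: complex
  assumes "k > 0" "b \<noteq> 0"
  shows "(\<Prod>z\<in>prim k. a - b * z) =
    (\<Sum>i\<le>degree (cyc k). coeff (cyc k) i * a ^ i * b ^ (degree (cyc k) - i))"
proof -
  define n where "n = degree (cyc k)"
  have "(\<Prod>z\<in>prim k. a - b * z) = (\<Prod>z\<in>prim k. b * (a / b - z))"
    using assms by (intro prod.cong refl) (simp add: field_simps)
  also have "\<dots> = b ^ n * (\<Prod>z\<in>prim k. (a / b - z))"
    by (simp add: prod.distrib n_def degree_cyc[OF assms(1)])
  also have "(\<Prod>z\<in>prim k. (a / b - z)) = poly (cyc k) (a / b)"
    by (simp add: cyc_def poly_prod)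
  also have "\<dots> = (\<Sum>i\<le>n. coeff (cyc k) i * (a / b) ^ i)" by (simp add: poly_altdef n_def)
  also have "b ^ n * \<dots> = (\<Sum>i\<le>n. coeff (cyc k) i * a ^ i * b ^ (n - i))"
    unfolding sum_distrib_left
  proof (intro sum.cong refl)
    fix i assume "i \<in> {..n}"
    hence "b ^ n = b ^ i * b ^ (n - i)" by (simp flip: power_add)
    thus "b ^ n * (coeff (cyc k) i * (a / b) ^ i) = coeff (cyc k) i * a ^ i * b ^ (n - i)"
      using assms by (simp add: power_divide field_simps)
  qed
  finally show ?thesis by (simp add: n_def)
qed



lemma key:
  fixes p lam k :: nat and h1 h2 :: int
  assumes "prime p" "ord p lam = k" "k \<ge> 3"
    and hne: "(h1, h2) \<noteq> (0, 0)" and hc: "[h1 + h2 * int lam = 0] (mod int p)"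
  shows "real p \<le> (sqrt 8 * real (r_weight (h1, h2))) ^ totient k"
proof -
  define A where "A = max 1 \<bar>h1\<bar>"
  define B where "B = max 1 \<bar>h2\<bar>"
  have A1: "A \<ge> 1" and B1: "B \<ge> 1" by (auto simp: A_def B_def)
  have rw: "real (r_weight (h1, h2)) = of_int A * of_int B"
  proof -
    have e1: "max 1 (nat \<bar>h1\<bar>) = nat A" unfolding A_def by (auto simp: max_def)
    have e2: "max 1 (nat \<bar>h2\<bar>) = nat B" unfolding B_def by (auto simp: max_def)
    show ?thesis unfolding r_weight_def fst_conv snd_conv e1 e2 using A1 B1 by simp
  qed
  have k0: "k > 0" using assms by simp
  have tk: "totient k \<ge> 1" using k0 by (simp add: Suc_le_eq)
  have AB1: "of_int A * of_int B \<ge> (1::real)" using A1 B1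
  proof -
    have "(1::real) * 1 \<le> of_int A * of_int B"
      using A1 B1 by (intro mult_mono) auto
    thus ?thesis by simp
  qed
  have s8: "sqrt 8 \<ge> (2::real)"
    by (rule real_le_rsqrt) simp
  have big: "(sqrt 8 * (of_int A * of_int B)) ^ totient k \<ge> of_int A * of_int B"
  proof -
    have ge1: "sqrt 8 * (of_int A * of_int B) \<ge> (1::real)"
    proof -
      have "(2::real) * 1 \<le> sqrt 8 * (of_int A * of_int B)"
        using s8 AB1 by (intro mult_mono) auto
      thus ?thesis by simp
    qed
    have "of_int A * of_int B \<le> sqrt 8 * (of_int A * of_int B)"
      using s8 AB1 by (simp add: mult_le_cancel_right1)
    also have "\<dots> \<le> (sqrt 8 * (of_int A * of_int B)) ^ totient k"
      using ge1 tk by (metis power_increasing power_one_right)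
    finally show ?thesis .
  qed
  show ?thesis
  proof (cases "h2 = 0")
    case True
    with hne have "h1 \<noteq> 0" by simp
    moreover have "int p dvd h1" using hc True by (simp add: cong_0_iff)
    ultimately have "\<bar>int p\<bar> \<le> \<bar>h1\<bar>" by (rule dvd_imp_le_int)
    hence "int p \<le> \<bar>h1\<bar>" by simp
    hence "real p \<le> of_int A" unfolding A_def by linarith
    also have "\<dots> \<le> of_int A * of_int B" using A1 B1 by simp
    finally show ?thesis using big rw by simp
  next
    case False
    define a where "a = - h1"
    define b where "b = h2"
    define n where "n = degree (cyc k)"
    have n_eq: "n = totient k" unfolding n_def using degree_cyc[OF k0] card_prim[OF k0] by simp
    have b0: "complex_of_int b \<noteq> 0" using False by (simp add: b_def)
    have cab: "[a = int lam * b] (mod int p)"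
    proof -
      have "int p dvd h1 + h2 * int lam" using hc by (simp add: cong_0_iff)
      moreover have "a - int lam * b = - (h1 + h2 * int lam)" by (simp add: a_def b_def algebra_simps)
      ultimately show ?thesis unfolding cong_iff_dvd_diff by (simp only: dvd_minus_iff)
    qed
    define M where "M = (\<Sum>i\<le>n. wc k i * a ^ i * b ^ (n - i))"
    have Meq: "complex_of_int M = (\<Prod>z\<in>prim k. of_int a - of_int b * z)"
      unfolding M_def using hom_eq[OF k0 b0, of "of_int a"] by (simp add: wc_eq[OF k0] n_def)
    have fz: "of_int a - of_int b * z \<noteq> 0" if "z \<in> prim k" for z
    proof
      assume "complex_of_int a - of_int b * z = 0"
      hence "Im (complex_of_int a - of_int b * z) = 0" by simp
      hence "of_int b * Im z = 0" by simp
      thus False using False prim_nonreal[OF assms(3) that] by (simp add: b_def)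
    qed
    have M0: "M \<noteq> 0"
    proof
      assume "M = 0"
      hence "(\<Prod>z\<in>prim k. complex_of_int a - of_int b * z) = 0" using Meq by simp
      thus False using fz finite_prim[OF k0] by simp
    qed
    have "[M = (\<Sum>i\<le>n. wc k i * (int lam * b) ^ i * b ^ (n - i))] (mod int p)"
      unfolding M_def by (intro cong_sum cong_mult cong_pow cong_refl cab)
    also have "(\<Sum>i\<le>n. wc k i * (int lam * b) ^ i * b ^ (n - i)) = b ^ n * cv k (int lam)"
      unfolding cv_sum[OF k0] n_def[symmetric] sum_distrib_left
    proof (intro sum.cong refl)
      fix i assume "i \<in> {..n}"
      hence "b ^ n = b ^ i * b ^ (n - i)" by (simp flip: power_add)
      thus "wc k i * (int lam * b) ^ i * b ^ (n - i) = b ^ n * (wc k i * int lam ^ i)"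
        by (simp add: power_mult_distrib)
    qed
    finally have "[M = b ^ n * cv k (int lam)] (mod int p)" .
    moreover have "int p dvd b ^ n * cv k (int lam)"
      using p_dvd_cv[OF assms(1,2) k0] by simp
    ultimately have "int p dvd M" by (simp add: cong_dvd_iff)
    hence "\<bar>int p\<bar> \<le> \<bar>M\<bar>" by (rule dvd_imp_le_int[OF M0])
    hence pM: "int p \<le> \<bar>M\<bar>" by simp
    have "real p \<le> norm (complex_of_int M)" using pM
    proof -
      have "real_of_int (int p) \<le> real_of_int \<bar>M\<bar>" using pM by (simp only: of_int_le_iff)
      thus ?thesis by simp
    qed
    also have "\<dots> = (\<Prod>z\<in>prim k. norm (of_int a - of_int b * z))"
      by (simp add: Meq prod_norm)
    also have "\<dots> \<le> (\<Prod>z\<in>prim k. of_int (\<bar>a\<bar> + \<bar>b\<bar>))"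
    proof (intro prod_mono conjI)
      fix z assume z: "z \<in> prim k"
      have "norm (complex_of_int a - of_int b * z) \<le> norm (complex_of_int a) + norm (of_int b * z)"
        by (rule norm_triangle_ineq4)
      also have "\<dots> = of_int (\<bar>a\<bar> + \<bar>b\<bar>)"
        using prim_norm[OF k0 z] by (simp add: norm_mult)
      finally show "norm (complex_of_int a - of_int b * z) \<le> of_int (\<bar>a\<bar> + \<bar>b\<bar>)" .
    qed simp
    also have "\<dots> = of_int (\<bar>a\<bar> + \<bar>b\<bar>) ^ totient k"
      using card_prim[OF k0] by simp
    also have "\<dots> \<le> (sqrt 8 * (of_int A * of_int B)) ^ totient k"
    proof (rule power_mono)
      have "\<bar>a\<bar> \<le> A" "\<bar>b\<bar> \<le> B" by (auto simp: a_def b_def A_def B_def)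
      hence "real_of_int (\<bar>a\<bar> + \<bar>b\<bar>) \<le> of_int A + of_int B" by simp
      also have "\<dots> \<le> 2 * (of_int A * of_int B)"
      proof -
        have "(of_int A - 1) * (of_int B - 1) \<ge> (0::real)" using A1 B1 by simp
        thus ?thesis using AB1 by (simp add: algebra_simps)
      qed
      also have "\<dots> \<le> sqrt 8 * (of_int A * of_int B)"
        using s8 AB1 by (intro mult_right_mono) auto
      finally show "real_of_int (\<bar>a\<bar> + \<bar>b\<bar>) \<le> sqrt 8 * (of_int A * of_int B)" .
    qed simp
    finally show ?thesis using rw by simp
  qed
qed


theorem lemma4p6:
  fixes p lam k :: nat
  assumes "prime p"
    and "1 \<le> lam" and "lam \<le> p - 1"
    and "ord p lam = k"
    and "k \<ge> 3"
  shows "real (rho (int lam) (int p)) \<ge> real p powr (1 / real (totient k)) / sqrt 8"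
proof -
  let ?P = "\<lambda>n. \<exists>h::int \<times> int. h \<noteq> (0, 0) \<and>
       [fst h + snd h * int lam = 0] (mod int p) \<and> n = r_weight h"
  have p0: "p > 0" using assms(1) prime_gt_0_nat by blast
  have "?P p"
  proof (intro exI conjI)
    show "(int p, 0::int) \<noteq> (0, 0)" using p0 by simp
    show "[fst (int p, 0::int) + snd (int p, 0::int) * int lam = 0] (mod int p)"
      by (simp add: cong_0_iff)
    show "p = r_weight (int p, 0)" using p0 by (simp add: r_weight_def)
  qed
  hence "?P (rho (int lam) (int p))" unfolding rho_def by (rule LeastI)
  then obtain h1 h2 where h: "(h1, h2) \<noteq> (0, 0)" "[h1 + h2 * int lam = 0] (mod int p)"
    and rh: "rho (int lam) (int p) = r_weight (h1, h2)" by auto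
  define r where "r = real (r_weight (h1, h2))"
  define t where "t = totient k"
  have t0: "t > 0" using assms(5) by (simp add: t_def)
  have r0: "r \<ge> 0" by (simp add: r_def)
  have le: "real p \<le> (sqrt 8 * r) ^ t"
    using key[OF assms(1,4,5) h] by (simp add: r_def t_def)
  have "real p powr (1 / real t) \<le> ((sqrt 8 * r) ^ t) powr (1 / real t)"
    using le by (intro powr_mono2) auto
  also have "((sqrt 8 * r) ^ t) powr (1 / real t) = sqrt 8 * r"
  proof -
    have "((sqrt 8 * r) ^ t) = (sqrt 8 * r) powr real t"
      using r0 t0 by (simp add: powr_realpow')
    thus ?thesis using t0 r0 by (simp add: powr_powr)
  qed
  finally have "real p powr (1 / real t) \<le> sqrt 8 * r" .
  hence "real p powr (1 / real t) / sqrt 8 \<le> r" by (simp add: divide_le_eq mult.commute)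
  thus ?thesis by (simp add: rh r_def t_def)
qed

end
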